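(* Let $\mathbf{A}\in\mathbb{R}^{m\times n}$, $l=\min\{m,n\}$, $r=\mathrm{rank}(\mathbf{A})$, $\mu,\nu\in[0,\infty)$, and define $\lambda\in[0,\infty]$ by $\lambda^2=0$ if $\mu=0$; $\lambda^2=\mu^2/|\mathbf{A}\mathbf{A}^T|^\nu$ if $\mu>0$ and $|\mathbf{A}\mathbf{A}^T|^\nu>0$; and $\lambda^2=\infty$ if $\mu>0$ and $|\mathbf{A}\mathbf{A}^T|^\nu=0$. Let $\sigma_1\ge\cdots\ge\sigma_l\ge0$ be the singular values of $\mathbf{A}$. Then $\|\mathbf{A}^{*(\lambda)}\|\le\min\{M_1,M_2\}$, where $M_1=0$ if $\mathbf{A}=\mathbf{0}$ and $M_1=1/\sigma_r$ if $\mathbf{A}\neq\mathbf{0}$, and $M_2=\infty$ if $\mu=0$ and $M_2=\frac{1}{2\mu}\prod_{i=1}^l\sigma_i^\nu$ if $\mu>0$. Moreover, if $\mu>0$ then $\|\mathbf{A}^{*(\lambda)}\|\le\frac{1}{2\mu}\|\mathbf{A}\|^{\nu l}$.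
   Context: $|\cdot|$ denotes the determinant, with the convention $0^0=1$. $\|\cdot\|$ is the spectral norm. For $\lambda\in[0,\infty]$ the (extended) damped pseudoinverse is $\mathbf{A}^{*(\lambda)}=\mathbf{A}^T(\mathbf{A}\mathbf{A}^T+\lambda^2\mathbf{I}_m)^+$ if $\lambda<\infty$ and $\mathbf{A}^{*(\infty)}=\mathbf{0}\in\mathbb{R}^{n\times m}$, where ${}^+$ is the Moore–Penrose pseudoinverse. *)

theory Defs
  imports "HOL-Analysis.Analysis" "HOL-Library.Extended_Real"
begin

text \<open>Real power with the convention 0^0 = 1 (Isabelle's powr has 0 powr 0 = 0).\<close>
definition pow0 :: "real \<Rightarrow> real \<Rightarrow> real" where
  "pow0 x a = (if x = 0 then (if a = 0 then 1 else 0) else x powr a)"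

definition spec_norm :: "real^'n^'m \<Rightarrow> real" where
  "spec_norm A = onorm (\<lambda>x. A *v x)"

definition mp_pinv :: "real^'n^'m \<Rightarrow> real^'m^'n" where
  "mp_pinv X = (THE Y. X ** Y ** X = X \<and> Y ** X ** Y = Y \<and>
                  transpose (X ** Y) = X ** Y \<and> transpose (Y ** X) = Y ** X)"

definition damped_pinv :: "ereal \<Rightarrow> real^'n^'m \<Rightarrow> real^'m^'n" where
  "damped_pinv lam A = (if lam = \<infinity> then 0
     else transpose A ** mp_pinv (A ** transpose A + ((real_of_ereal lam)\<^sup>2) *\<^sub>R mat 1))"

text \<open>sigma 1 \<ge> ... \<ge> sigma l \<ge> 0 (1-indexed, l = min m n) are the singular values of A:
  A = U D V^T with U, V orthogonal and D the m x n "diagonal" matrix with diagonal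
  sigma 1, ..., sigma l, rows/columns numbered 1..m and 1..n by bijections em, en.\<close>
definition singular_values :: "real^'n^'m \<Rightarrow> (nat \<Rightarrow> real) \<Rightarrow> bool" where
  "singular_values A \<sigma> \<longleftrightarrow>
     (let l = min CARD('m) CARD('n) in
       (\<forall>i\<in>{1..l}. 0 \<le> \<sigma> i) \<and> (\<forall>i\<in>{1..l}. \<forall>j\<in>{1..l}. i \<le> j \<longrightarrow> \<sigma> j \<le> \<sigma> i) \<and>
       (\<exists>(U::real^'m^'m) (V::real^'n^'n) (em::'m \<Rightarrow> nat) (en::'n \<Rightarrow> nat).
          orthogonal_matrix U \<and> orthogonal_matrix V \<and>
          bij_betw em UNIV {1..CARD('m)} \<and> bij_betw en UNIV {1..CARD('n)} \<and>
          A = U ** (\<chi> i j. if em i = en j then \<sigma> (em i) else 0) ** transpose V))"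

end

theory Submission
  imports Defs
begin


lemma mp_unique:
  fixes X :: "real^'n^'m" and Y Z :: "real^'m^'n"
  assumes y1: "X ** Y ** X = X" and y2: "Y ** X ** Y = Y" and y3: "transpose (X ** Y) = X ** Y"
      and y4: "transpose (Y ** X) = Y ** X"
      and z1: "X ** Z ** X = X" and z2: "Z ** X ** Z = Z" and z3: "transpose (X ** Z) = X ** Z"
      and z4: "transpose (Z ** X) = Z ** X"
  shows "Y = Z"
proof -
  have XY: "X ** Y = X ** Z"
  proof -
    have "X ** Y = transpose (X ** Y)" using y3 by simp
    also have "\<dots> = transpose ((X ** Z ** X) ** Y)" using z1 by simp
    also have "\<dots> = transpose ((X ** Z) ** (X ** Y))" by (simp add: matrix_mul_assoc)
    also have "\<dots> = transpose (X ** Y) ** transpose (X ** Z)" by (simp add: matrix_transpose_mul)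
    also have "\<dots> = (X ** Y) ** (X ** Z)" using y3 z3 by simp
    also have "\<dots> = (X ** Y ** X) ** Z" by (simp add: matrix_mul_assoc)
    also have "\<dots> = X ** Z" using y1 by simp
    finally show ?thesis .
  qed
  have YX: "Y ** X = Z ** X"
  proof -
    have "Y ** X = transpose (Y ** X)" using y4 by simp
    also have "\<dots> = transpose (Y ** (X ** Z ** X))" using z1 by simp
    also have "\<dots> = transpose ((Y ** X) ** (Z ** X))" by (simp add: matrix_mul_assoc)
    also have "\<dots> = transpose (Z ** X) ** transpose (Y ** X)" by (simp add: matrix_transpose_mul)
    also have "\<dots> = (Z ** X) ** (Y ** X)" using y4 z4 by simp
    also have "\<dots> = Z ** (X ** Y ** X)" by (simp add: matrix_mul_assoc)
    also have "\<dots> = Z ** X" using y1 by simp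
    finally show ?thesis .
  qed
  have "Y = Y ** X ** Y" using y2 by simp
  also have "\<dots> = Y ** (X ** Z)" using XY by (metis matrix_mul_assoc)
  also have "\<dots> = (Z ** X) ** Z" using YX by (metis matrix_mul_assoc)
  also have "\<dots> = Z" using z2 by simp
  finally show ?thesis .
qed

lemma mp_pinv_eq:
  fixes X :: "real^'n^'m" and Y :: "real^'m^'n"
  assumes "X ** Y ** X = X" "Y ** X ** Y = Y" "transpose (X ** Y) = X ** Y"
      "transpose (Y ** X) = Y ** X"
  shows "mp_pinv X = Y"
  unfolding mp_pinv_def
  apply (rule the_equality)
  using assms apply blast
  using assms mp_unique by blast



definition dg :: "('m \<Rightarrow> real) \<Rightarrow> real^'m^'m" where
  "dg d = (\<chi> i j. if i = j then d i else 0)"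

definition gd :: "('m \<Rightarrow> nat) \<Rightarrow> ('n \<Rightarrow> nat) \<Rightarrow> (nat \<Rightarrow> real) \<Rightarrow> real^'n^'m" where
  "gd em en h = (\<chi> i j. if em i = en j then h (em i) else 0)"

lemma sum_match:
  fixes en :: "'n::finite \<Rightarrow> 'b"
  assumes "inj en"
  shows "(\<Sum>j\<in>UNIV. if en j = k then f j else 0) = (if k \<in> range en then f (inv en k) else (0::real))"
proof (cases "k \<in> range en")
  case True
  then obtain j0 where k: "k = en j0" by auto
  have "(\<Sum>j\<in>UNIV. if en j = k then f j else 0) = (\<Sum>j\<in>UNIV. if j = j0 then f j else 0)"
    using assms k by (intro sum.cong) (auto simp: inj_eq)
  also have "\<dots> = f j0" by simp
  finally show ?thesis using True k assms by (simp add: inv_f_f)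
next
  case False
  then show ?thesis by (auto intro!: sum.neutral)
qed

lemma dg_mult: "dg a ** dg b = dg (\<lambda>i. a i * b i)"
proof -
  have H: "(\<Sum>k\<in>UNIV. (if i = k then a i else 0) * (if k = j then b k else 0))
     = (if i = j then a i * b i else 0)" for i j
  proof -
    have "(\<Sum>k\<in>UNIV. (if i = k then a i else 0) * (if k = j then b k else 0))
     = (\<Sum>k\<in>UNIV. if k = i then (if i = j then a i * b i else 0) else 0)"
      by (intro sum.cong) auto
    then show ?thesis by simp
  qed
  show ?thesis by (simp only: dg_def matrix_matrix_mult_def vec_lambda_beta H)
qed

lemma dg_transpose: "transpose (dg a) = dg a"
  by (simp add: dg_def transpose_def vec_eq_iff)

lemma gd_gdT:
  assumes "inj en" "inj em"
  shows "gd em en h ** transpose (gd em en h) = dg (\<lambda>i. if em i \<in> range en then (h (em i))\<^sup>2 else 0)"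
proof -
  have diag: "(\<Sum>j\<in>UNIV. (if em i = en j then h (em i) else 0) * (if em i = en j then h (em i) else 0))
       = (if em i \<in> range en then (h (em i))\<^sup>2 else 0)" for i
  proof -
    have "(\<Sum>j\<in>UNIV. (if em i = en j then h (em i) else 0) * (if em i = en j then h (em i) else 0))
       = (\<Sum>j\<in>UNIV. if en j = em i then (h (em i))\<^sup>2 else 0)"
      by (intro sum.cong) (auto simp: power2_eq_square)
    also have "\<dots> = (if em i \<in> range en then (h (em i))\<^sup>2 else 0)"
      using sum_match[OF assms(1), of "em i" "\<lambda>_. (h (em i))\<^sup>2"] by simp
    finally show ?thesis .
  qed
  have "(\<Sum>j\<in>UNIV. (if em i = en j then h (em i) else 0) * (if em i' = en j then h (em i') else 0))
      = (if i = i' then (if em i \<in> range en then (h (em i))\<^sup>2 else 0) else 0)" for i i'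
  proof (cases "i = i'")
    case True
    show ?thesis unfolding True by (simp only: diag refl if_True)
  next
    case False
    then have "em i \<noteq> em i'" using assms(2) by (auto simp: inj_eq)
    then show ?thesis using False by (auto intro!: sum.neutral)
  qed
  then show ?thesis
    by (simp add: gd_def dg_def matrix_matrix_mult_def transpose_def vec_eq_iff)
qed

lemma gdT_dg:
  "transpose (gd em en h) ** dg f = (\<chi> j i. if em i = en j then h (em i) * f i else 0)"
proof -
  have H: "(\<Sum>k\<in>UNIV. (if em k = en j then h (em k) else 0) * (if k = i then f k else 0))
      = (if em i = en j then h (em i) * f i else 0)" for i j
  proof -
    have "(\<Sum>k\<in>UNIV. (if em k = en j then h (em k) else 0) * (if k = i then f k else 0))
      = (\<Sum>k\<in>UNIV. if k = i then (if em i = en j then h (em i) else 0) * f i else 0)"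
      by (intro sum.cong) auto
    then show ?thesis by simp
  qed
  show ?thesis
    by (simp only: gd_def dg_def matrix_matrix_mult_def transpose_def vec_lambda_beta H)
qed



lemma norm_sq_vec: "(norm (x::real^'n))\<^sup>2 = (\<Sum>i\<in>UNIV. (x$i)\<^sup>2)"
  unfolding power2_norm_eq_inner inner_vec_def by (simp add: power2_eq_square)

lemma sum_match':
  fixes en :: "'n::finite \<Rightarrow> 'b"
  assumes "inj en"
  shows "(\<Sum>j\<in>UNIV. if k = en j then f j else 0) = (if k \<in> range en then f (inv en k) else (0::real))"
proof -
  have "(\<Sum>j\<in>UNIV. if k = en j then f j else 0) = (\<Sum>j\<in>UNIV. if en j = k then f j else 0)"
    by (rule sum.cong) auto
  then show ?thesis using sum_match[OF assms] by simp
qed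

lemma match_norm:
  fixes x :: "real^'m" and em :: "'m::finite \<Rightarrow> nat" and en :: "'n::finite \<Rightarrow> nat"
  assumes iem: "inj em" and ien: "inj en" and cb: "\<And>i. \<bar>c i\<bar> \<le> b"
  shows "norm ((\<chi> j i. if em i = en j then c i else 0 :: real^'m^'n) *v x) \<le> b * norm x"
proof -
  let ?M = "(\<chi> j i. if em i = en j then c i else 0 :: real^'m^'n)"
  have b0: "0 \<le> b" using cb[of undefined] by linarith
  have comp: "(?M *v x)$j = (\<Sum>i\<in>UNIV. if em i = en j then c i * x$i else 0)" for j
    by (simp add: matrix_vector_mult_def) (rule sum.cong, auto)
  have sq: "((?M *v x)$j)\<^sup>2 = (\<Sum>i\<in>UNIV. if em i = en j then (c i * x$i)\<^sup>2 else 0)" for j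
  proof -
    have "((?M *v x)$j)\<^sup>2 = (if en j \<in> range em then (c (inv em (en j)) * x$(inv em (en j)))\<^sup>2 else 0)"
      unfolding comp using sum_match[OF iem, of "en j" "\<lambda>i. c i * x$i"] by simp
    also have "\<dots> = (\<Sum>i\<in>UNIV. if em i = en j then (c i * x$i)\<^sup>2 else 0)"
      using sum_match[OF iem, of "en j" "\<lambda>i. (c i * x$i)\<^sup>2"] by simp
    finally show ?thesis .
  qed
  have "(norm (?M *v x))\<^sup>2 = (\<Sum>j\<in>UNIV. \<Sum>i\<in>UNIV. if em i = en j then (c i * x$i)\<^sup>2 else 0)"
    unfolding norm_sq_vec sq ..
  also have "\<dots> = (\<Sum>i\<in>UNIV. \<Sum>j\<in>UNIV. if em i = en j then (c i * x$i)\<^sup>2 else 0)"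
    by (rule sum.swap)
  also have "\<dots> = (\<Sum>i\<in>UNIV. if em i \<in> range en then (c i * x$i)\<^sup>2 else 0)"
    using sum_match'[OF ien] by simp
  also have "\<dots> \<le> (\<Sum>i\<in>UNIV. b\<^sup>2 * (x$i)\<^sup>2)"
  proof (intro sum_mono)
    fix i
    have "(c i * x$i)\<^sup>2 = (c i)\<^sup>2 * (x$i)\<^sup>2" by (simp add: power_mult_distrib)
    also have "\<dots> \<le> b\<^sup>2 * (x$i)\<^sup>2"
    proof (rule mult_right_mono)
      show "(c i)\<^sup>2 \<le> b\<^sup>2" using cb[of i] b0 by (simp add: power2_le_iff_abs_le)
    qed simp
    finally show "(if em i \<in> range en then (c i * x$i)\<^sup>2 else 0) \<le> b\<^sup>2 * (x$i)\<^sup>2"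
      by auto
  qed
  also have "\<dots> = (b * norm x)\<^sup>2"
    unfolding power_mult_distrib norm_sq_vec by (simp add: sum_distrib_left)
  finally have "(norm (?M *v x))\<^sup>2 \<le> (b * norm x)\<^sup>2" .
  moreover have "0 \<le> b * norm x" using b0 by simp
  ultimately show ?thesis by (rule power2_le_imp_le)
qed

lemma orth_norm:
  fixes U :: "real^'n^'n"
  assumes "orthogonal_matrix U"
  shows "norm (U *v x) = norm x"
proof -
  have "orthogonal_transformation ((*v) U)"
    using assms by (simp add: orthogonal_transformation_matrix)
  then show ?thesis by (simp add: orthogonal_transformation_norm)
qed

lemma spec_norm_le:
  fixes M :: "real^'n^'m"
  assumes "\<And>x. norm (M *v x) \<le> b * norm x"
  shows "spec_norm M \<le> b"
  unfolding spec_norm_def using assms by (rule onorm_le)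

lemma spec_norm_ge:
  fixes M :: "real^'n^'m"
  shows "norm (M *v x) \<le> spec_norm M * norm x"
  unfolding spec_norm_def by (rule onorm) simp



lemma mat_rmul: "(A::real^'n^'m) ** mat c = c *\<^sub>R A"
  by (simp add: vec_eq_iff matrix_matrix_mult_def mat_def if_distrib sum.delta' cong: if_cong)

lemma scaleR_mmul: "(c *\<^sub>R (A::real^'n^'m)) ** (B::real^'p^'n) = c *\<^sub>R (A ** B)"
  by (simp add: vec_eq_iff matrix_matrix_mult_def sum_distrib_left mult.assoc)

lemma scaleR_mat1: "c *\<^sub>R (mat 1 :: real^'n^'n) = mat c"
  by (simp add: vec_eq_iff mat_def)

lemma orth_conj_mult:
  fixes U :: "real^'n^'n"
  assumes "orthogonal_matrix U"
  shows "(U ** P ** transpose U) ** (U ** Q ** transpose U) = U ** (P ** Q) ** transpose U"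
proof -
  have "transpose U ** U = mat 1" using assms by (simp add: orthogonal_matrix_def)
  have "(U ** P ** transpose U) ** (U ** Q ** transpose U) = U ** (P ** ((transpose U ** U) ** Q)) ** transpose U"
    by (simp only: matrix_mul_assoc)
  then show ?thesis using \<open>transpose U ** U = mat 1\<close> by simp
qed

lemma transpose_conj: "transpose (U ** P ** transpose U) = U ** transpose P ** transpose (U::real^'n^'n)"
  by (simp add: matrix_transpose_mul matrix_mul_assoc)

lemma orth_conj_mat: 
  fixes U :: "real^'n^'n"
  assumes "orthogonal_matrix U"
  shows "U ** mat c ** transpose U = mat c"
proof -
  have "U ** transpose U = mat 1" using assms by (simp add: orthogonal_matrix_def)
  then show ?thesis
    by (metis mat_rmul matrix_mul_rid scaleR_mat1 scaleR_mmul)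
qed

lemma dg_add_mat: "dg e0 + mat c = dg (\<lambda>i. e0 i + c)"
  by (simp add: vec_eq_iff dg_def mat_def)

lemma pinv_dg:
  fixes U :: "real^'n^'n"
  assumes "orthogonal_matrix U"
  shows "mp_pinv (U ** dg e ** transpose U) = U ** dg (\<lambda>i. inverse (e i)) ** transpose U"
proof (rule mp_pinv_eq)
  have fe: "(\<lambda>i. e i * inverse (e i) * e i) = e" "(\<lambda>i. inverse (e i) * e i * inverse (e i)) = (\<lambda>i. inverse (e i))"
    by (rule ext, case_tac "e i = 0", simp_all)+
  show "U ** dg e ** transpose U ** (U ** dg (\<lambda>i. inverse (e i)) ** transpose U) ** (U ** dg e ** transpose U) =
    U ** dg e ** transpose U"
    by (simp only: orth_conj_mult[OF assms] dg_mult fe)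
  show "U ** dg (\<lambda>i. inverse (e i)) ** transpose U ** (U ** dg e ** transpose U) ** (U ** dg (\<lambda>i. inverse (e i)) ** transpose U) =
    U ** dg (\<lambda>i. inverse (e i)) ** transpose U"
    by (simp only: orth_conj_mult[OF assms] dg_mult fe)
  show "transpose (U ** dg e ** transpose U ** (U ** dg (\<lambda>i. inverse (e i)) ** transpose U)) =
    U ** dg e ** transpose U ** (U ** dg (\<lambda>i. inverse (e i)) ** transpose U)"
    by (simp only: orth_conj_mult[OF assms] dg_mult transpose_conj dg_transpose)
  show "transpose (U ** dg (\<lambda>i. inverse (e i)) ** transpose U ** (U ** dg e ** transpose U)) =
    U ** dg (\<lambda>i. inverse (e i)) ** transpose U ** (U ** dg e ** transpose U)"
    by (simp only: orth_conj_mult[OF assms] dg_mult transpose_conj dg_transpose)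
qed



lemma matrix_add_rdistrib': "((B + C) ** (A::real^'p^'n)) = (B ** A) + (C ** A)" for B C :: "real^'n^'m"
  by (vector matrix_matrix_mult_def sum.distrib[symmetric] field_simps)

lemma pinv_bound:
  fixes A :: "real^'n^'m" and U :: "real^'m^'m" and V :: "real^'n^'n"
    and em :: "'m \<Rightarrow> nat" and en :: "'n \<Rightarrow> nat"
  assumes oU: "orthogonal_matrix U" and oV: "orthogonal_matrix V"
    and iem: "inj em" and ien: "inj en" and A: "A = U ** gd em en \<sigma> ** transpose V"
    and hb: "\<And>i. em i \<in> range en \<Longrightarrow> \<bar>\<sigma> (em i) * inverse ((\<sigma> (em i))\<^sup>2 + t\<^sup>2)\<bar> \<le> b"
    and b0: "0 \<le> b"
  shows "spec_norm (transpose A ** mp_pinv (A ** transpose A + t\<^sup>2 *\<^sub>R mat 1)) \<le> b"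
proof -
  define D where "D = gd em en \<sigma>"
  define e0 where "e0 = (\<lambda>i. if em i \<in> range en then (\<sigma> (em i))\<^sup>2 else 0)"
  define e where "e = (\<lambda>i. e0 i + t\<^sup>2)"
  define c where "c = (\<lambda>i. if em i \<in> range en then \<sigma> (em i) * inverse (e i) else 0)"
  have UU: "transpose U ** U = mat 1" and VV: "transpose V ** V = mat 1"
    using oU oV by (auto simp: orthogonal_matrix_def)
  have AT: "transpose A = V ** transpose D ** transpose U"
    unfolding A D_def by (simp add: matrix_transpose_mul matrix_mul_assoc)
  have "A ** transpose A = U ** (D ** ((transpose V ** V) ** transpose D)) ** transpose U"
    unfolding AT unfolding A D_def by (simp only: matrix_mul_assoc)
  also have "\<dots> = U ** dg e0 ** transpose U"
    unfolding VV D_def e0_def using gd_gdT[OF ien iem] by simp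
  finally have AAT: "A ** transpose A = U ** dg e0 ** transpose U" .
  have X: "A ** transpose A + t\<^sup>2 *\<^sub>R mat 1 = U ** dg e ** transpose U"
  proof -
    have "A ** transpose A + t\<^sup>2 *\<^sub>R mat 1 = U ** dg e0 ** transpose U + U ** mat (t\<^sup>2) ** transpose U"
      unfolding AAT scaleR_mat1 orth_conj_mat[OF oU] ..
    also have "\<dots> = U ** (dg e0 + mat (t\<^sup>2)) ** transpose U"
      by (simp add: matrix_add_ldistrib matrix_add_rdistrib')
    finally show ?thesis unfolding dg_add_mat e_def .
  qed
  have "transpose A ** mp_pinv (A ** transpose A + t\<^sup>2 *\<^sub>R mat 1)
      = V ** (transpose D ** ((transpose U ** U) ** dg (\<lambda>i. inverse (e i)))) ** transpose U"
    unfolding X pinv_dg[OF oU] by (simp only: AT matrix_mul_assoc)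
  also have "\<dots> = V ** (\<chi> j i. if em i = en j then c i else 0) ** transpose U"
  proof -
    have "transpose D ** dg (\<lambda>i. inverse (e i)) = (\<chi> j i. if em i = en j then c i else 0)"
      unfolding D_def gdT_dg by (auto simp: vec_eq_iff c_def)
    then show ?thesis unfolding UU by simp
  qed
  finally have eq: "transpose A ** mp_pinv (A ** transpose A + t\<^sup>2 *\<^sub>R mat 1)
      = V ** (\<chi> j i. if em i = en j then c i else 0) ** transpose U" .
  have cb: "\<bar>c i\<bar> \<le> b" for i
    using hb[of i] b0 by (auto simp: c_def e_def e0_def)
  show ?thesis unfolding eq
  proof (rule spec_norm_le)
    fix x
    have "norm ((V ** (\<chi> j i. if em i = en j then c i else 0) ** transpose U) *v x)
       = norm ((\<chi> j i. if em i = en j then c i else 0 :: real^'m^'n) *v (transpose U *v x))"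
      by (simp add: matrix_vector_mul_assoc[symmetric] orth_norm[OF oV])
    also have "\<dots> \<le> b * norm (transpose U *v x)"
      by (rule match_norm[OF iem ien cb])
    also have "\<dots> = b * norm x"
      using orth_norm[of "transpose U" x] oU by (simp del: transpose_matrix_vector)
    finally show "norm ((V ** (\<chi> j i. if em i = en j then c i else 0) ** transpose U) *v x) \<le> b * norm x" .
  qed
qed



lemma AAT_eq:
  fixes A :: "real^'n^'m" and U :: "real^'m^'m" and V :: "real^'n^'n"
    and em :: "'m \<Rightarrow> nat" and en :: "'n \<Rightarrow> nat"
  assumes oV: "orthogonal_matrix V"
    and iem: "inj em" and ien: "inj en" and A: "A = U ** gd em en \<sigma> ** transpose V"
  shows "A ** transpose A = U ** dg (\<lambda>i. if em i \<in> range en then (\<sigma> (em i))\<^sup>2 else 0) ** transpose U"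
proof -
  define D where "D = gd em en \<sigma>"
  have VV: "transpose V ** V = mat 1"
    using oV by (auto simp: orthogonal_matrix_def)
  have AT: "transpose A = V ** transpose D ** transpose U"
    unfolding A D_def by (simp add: matrix_transpose_mul matrix_mul_assoc)
  have "A ** transpose A = U ** (D ** ((transpose V ** V) ** transpose D)) ** transpose U"
    unfolding AT unfolding A D_def by (simp only: matrix_mul_assoc)
  also have "\<dots> = U ** dg (\<lambda>i. if em i \<in> range en then (\<sigma> (em i))\<^sup>2 else 0) ** transpose U"
    unfolding VV D_def using gd_gdT[OF ien iem] by simp
  finally show ?thesis .
qed

lemma det_AAT:
  fixes A :: "real^'n^'m" and U :: "real^'m^'m" and V :: "real^'n^'n"
    and em :: "'m \<Rightarrow> nat" and en :: "'n \<Rightarrow> nat"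
  assumes oU: "orthogonal_matrix U" and oV: "orthogonal_matrix V"
    and bem: "bij_betw em UNIV {1..CARD('m)}" and ben: "bij_betw en UNIV {1..CARD('n)}"
    and A: "A = U ** gd em en \<sigma> ** transpose V"
  shows "det (A ** transpose A) = (\<Prod>k\<in>{1..CARD('m)}. if k \<le> CARD('n) then (\<sigma> k)\<^sup>2 else 0)"
proof -
  have iem: "inj em" and ien: "inj en" using bem ben by (auto simp: bij_betw_def)
  have ren: "range en = {1..CARD('n)}" using ben by (auto simp: bij_betw_def)
  have rem: "range em = {1..CARD('m)}" using bem by (auto simp: bij_betw_def)
  define e0 where "e0 = (\<lambda>i. if em i \<in> range en then (\<sigma> (em i))\<^sup>2 else 0)"
  have "det (A ** transpose A) = det U * det (dg e0) * det U"
    unfolding AAT_eq[OF oV iem ien A] e0_def[symmetric] by (simp add: det_mul)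
  also have "\<dots> = det (dg e0)"
    using det_orthogonal_matrix[OF oU] by auto
  also have "\<dots> = (\<Prod>i\<in>UNIV. e0 i)"
    by (subst det_diagonal) (auto simp: dg_def)
  also have "\<dots> = (\<Prod>i\<in>UNIV. (\<lambda>k. if k \<le> CARD('n) then (\<sigma> k)\<^sup>2 else 0) (em i))"
  proof (rule prod.cong)
    fix i
    have "em i \<in> {1..CARD('m)}" using rem by auto
    then show "e0 i = (\<lambda>k. if k \<le> CARD('n) then (\<sigma> k)\<^sup>2 else 0) (em i)"
      unfolding e0_def ren by auto
  qed simp
  also have "\<dots> = (\<Prod>k\<in>{1..CARD('m)}. if k \<le> CARD('n) then (\<sigma> k)\<^sup>2 else 0)"
    by (rule prod.reindex_bij_betw[OF bem])
  finally show ?thesis .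
qed

lemma prefix_set:
  fixes S :: "nat set"
  assumes "finite S" "\<And>k. k \<in> S \<Longrightarrow> 1 \<le> k" "\<And>k j. k \<in> S \<Longrightarrow> 1 \<le> j \<Longrightarrow> j \<le> k \<Longrightarrow> j \<in> S"
  shows "S = {1..card S}"
proof (cases "S = {}")
  case True then show ?thesis by simp
next
  case False
  define p where "p = Max S"
  have "p \<in> S" using False assms(1) by (simp add: p_def)
  have "S = {1..p}"
  proof
    show "S \<subseteq> {1..p}" using assms(1,2) by (auto simp: p_def)
    show "{1..p} \<subseteq> S" using assms(3)[OF \<open>p \<in> S\<close>] by auto
  qed
  then show ?thesis by simp
qed

lemma rank_gd:
  fixes A :: "real^'n^'m" and U :: "real^'m^'m" and V :: "real^'n^'n"
    and em :: "'m \<Rightarrow> nat" and en :: "'n \<Rightarrow> nat"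
  assumes oU: "orthogonal_matrix U" and oV: "orthogonal_matrix V"
    and bem: "bij_betw em UNIV {1..CARD('m)}" and ben: "bij_betw en UNIV {1..CARD('n)}"
    and A: "A = U ** gd em en \<sigma> ** transpose V"
  shows "rank A = card {k\<in>{1..min CARD('m) CARD('n)}. \<sigma> k \<noteq> 0}"
proof -
  have iem: "inj em" and ien: "inj en" using bem ben by (auto simp: bij_betw_def)
  have ren: "range en = {1..CARD('n)}" using ben by (auto simp: bij_betw_def)
  have rem: "range em = {1..CARD('m)}" using bem by (auto simp: bij_betw_def)
  define D where "D = gd em en \<sigma>"
  have UU: "transpose U ** U = mat 1" and VV: "transpose V ** V = mat 1"
    using oU oV by (auto simp: orthogonal_matrix_def)
  have "rank A \<le> rank D"
    unfolding A D_def using rank_mul_le_left rank_mul_le_right order_trans by metis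
  moreover have "D = transpose U ** A ** V"
  proof -
    have "transpose U ** A ** V = (transpose U ** U) ** D ** (transpose V ** V)"
      unfolding A D_def by (simp only: matrix_mul_assoc)
    then show ?thesis unfolding UU VV by simp
  qed
  then have "rank D \<le> rank A" using rank_mul_le_left rank_mul_le_right order_trans by metis
  ultimately have rAD: "rank A = rank D" by simp
  define I where "I = {i. em i \<in> range en \<and> \<sigma> (em i) \<noteq> 0}"
  have Dx: "(D *v x)$i = (if em i \<in> range en then \<sigma> (em i) * x$(inv en (em i)) else 0)" for x i
  proof -
    have "(D *v x)$i = (\<Sum>j\<in>UNIV. if em i = en j then \<sigma> (em i) * x$j else 0)"
      unfolding D_def gd_def matrix_vector_mult_def by (simp, rule sum.cong, auto)
    then show ?thesis using sum_match'[OF ien, of "em i" "\<lambda>j. \<sigma> (em i) * x$j"] by simp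
  qed
  have range: "range (\<lambda>x. D *v x) = {y. \<forall>i. i \<notin> I \<longrightarrow> y$i = 0}"
  proof
    show "range (\<lambda>x. D *v x) \<subseteq> {y. \<forall>i. i \<notin> I \<longrightarrow> y$i = 0}"
      by (auto simp: Dx I_def)
    show "{y. \<forall>i. i \<notin> I \<longrightarrow> y$i = 0} \<subseteq> range (\<lambda>x. D *v x)"
    proof
      fix y :: "real^'m" assume y: "y \<in> {y. \<forall>i. i \<notin> I \<longrightarrow> y$i = 0}"
      define x where "x = (\<chi> j. if en j \<in> range em then y$(inv em (en j)) / \<sigma> (en j) else 0)"
      have "D *v x = y"
      proof (subst vec_eq_iff, intro allI)
        fix i
        show "(D *v x)$i = y$i"
        proof (cases "em i \<in> range en")
          case True
          then obtain j0 where j0: "en j0 = em i" by auto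
          have "inv en (em i) = j0" using j0 ien by (metis inv_f_f)
          moreover have "inv em (em i) = i" using iem by (simp add: inv_f_f)
          ultimately show ?thesis using True y j0 by (auto simp: Dx x_def I_def)
        next
          case False
          then show ?thesis using y by (auto simp: Dx I_def)
        qed
      qed
      then show "y \<in> range (\<lambda>x. D *v x)" by blast
    qed
  qed
  have "rank D = card I"
    unfolding rank_dim_range range dim_vec_eq[symmetric] by (rule dim_substandard_cart)
  also have "\<dots> = card (em ` I)"
    using iem by (simp add: card_image inj_on_subset)
  also have "em ` I = {k\<in>{1..min CARD('m) CARD('n)}. \<sigma> k \<noteq> 0}"
  proof
    show "em ` I \<subseteq> {k\<in>{1..min CARD('m) CARD('n)}. \<sigma> k \<noteq> 0}"
      using rem ren by (auto simp: I_def)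
    show "{k\<in>{1..min CARD('m) CARD('n)}. \<sigma> k \<noteq> 0} \<subseteq> em ` I"
    proof
      fix k assume k: "k \<in> {k\<in>{1..min CARD('m) CARD('n)}. \<sigma> k \<noteq> 0}"
      then have "k \<in> range em" using rem by auto
      then obtain i where "k = em i" by auto
      then show "k \<in> em ` I" using k ren by (auto simp: I_def)
    qed
  qed
  finally show ?thesis using rAD by simp
qed

lemma sigma1_le:
  fixes A :: "real^'n^'m" and U :: "real^'m^'m" and V :: "real^'n^'n"
    and em :: "'m \<Rightarrow> nat" and en :: "'n \<Rightarrow> nat"
  assumes oU: "orthogonal_matrix U" and oV: "orthogonal_matrix V"
    and bem: "bij_betw em UNIV {1..CARD('m)}" and ben: "bij_betw en UNIV {1..CARD('n)}"
    and A: "A = U ** gd em en \<sigma> ** transpose V"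
  shows "\<sigma> 1 \<le> spec_norm A"
proof -
  have ren: "range en = {1..CARD('n)}" using ben by (auto simp: bij_betw_def)
  have rem: "range em = {1..CARD('m)}" using bem by (auto simp: bij_betw_def)
  have "1 \<in> range en" unfolding ren by (simp add: Suc_le_eq)
  then obtain j0 where j0: "en j0 = 1" by (metis rangeE)
  have "1 \<in> range em" unfolding rem by (simp add: Suc_le_eq)
  then obtain i0 where i0: "em i0 = 1" by (metis rangeE)
  define D where "D = gd em en \<sigma>"
  define x where "x = V *v axis j0 1"
  have VV: "transpose V ** V = mat 1"
    using oV by (auto simp: orthogonal_matrix_def)
  have nx: "norm x = 1" unfolding x_def orth_norm[OF oV] by simp
  have "A *v x = U *v (D *v ((transpose V ** V) *v axis j0 1))"
    unfolding A D_def x_def by (simp add: matrix_vector_mul_assoc matrix_mul_assoc)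
  then have Ax: "A *v x = U *v (D *v axis j0 1)" unfolding VV by simp
  have "(D *v axis j0 1)$i0 = \<sigma> 1"
    unfolding matrix_vector_mult_basis by (simp add: column_def D_def gd_def i0 j0)
  then have "\<sigma> 1 \<le> norm (D *v axis j0 1)"
    by (metis component_le_norm_cart abs_ge_self order_trans)
  also have "\<dots> = norm (A *v x)" unfolding Ax orth_norm[OF oU] ..
  also have "\<dots> \<le> spec_norm A * norm x" by (rule spec_norm_ge)
  finally show ?thesis using nx by simp
qed



lemma sc0: "0 \<le> s \<Longrightarrow> 0 \<le> s * inverse (s\<^sup>2 + (t::real)\<^sup>2)"
  by simp

lemma sc1:
  fixes s t :: real
  assumes "0 < s" shows "s * inverse (s\<^sup>2 + t\<^sup>2) \<le> 1 / s"
proof -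
  have "inverse (s\<^sup>2 + t\<^sup>2) \<le> inverse (s\<^sup>2)"
    by (rule le_imp_inverse_le) (use assms in auto)
  then have "s * inverse (s\<^sup>2 + t\<^sup>2) \<le> s * inverse (s\<^sup>2)"
    using assms by (intro mult_left_mono) auto
  also have "s * inverse (s\<^sup>2) = 1 / s" using assms by (simp add: power2_eq_square field_simps)
  finally show ?thesis .
qed

lemma sc2:
  fixes s t :: real
  assumes "0 \<le> s" "0 < t" shows "s * inverse (s\<^sup>2 + t\<^sup>2) \<le> 1 / (2 * t)"
proof -
  have "0 \<le> (s - t)\<^sup>2" by simp
  then have h: "2 * t * s \<le> s\<^sup>2 + t\<^sup>2" by (simp add: power2_eq_square algebra_simps)
  have pos: "0 < s\<^sup>2 + t\<^sup>2" using assms by (simp add: add_nonneg_pos)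
  show ?thesis using h pos assms by (simp add: field_simps)
qed

lemma pow0_nonneg: "0 \<le> pow0 x a"
  by (simp add: pow0_def)

lemma pow0_zero_exp: "pow0 x 0 = 1"
  by (simp add: pow0_def)

lemma spec_norm_nonneg: "0 \<le> spec_norm (M::real^'n^'m)"
  unfolding spec_norm_def by (rule onorm_pos_le) simp

lemma spec_norm_zero: "spec_norm (0::real^'n^'m) = 0"
proof -
  have e: "(\<lambda>x. (0::real^'n^'m) *v x) = (\<lambda>x. 0)" by auto
  show ?thesis unfolding spec_norm_def e by (rule onorm_zero)
qed

lemma transpose_zero': "transpose (0::real^'n^'m) = 0"
  by (simp add: transpose_def vec_eq_iff)



theorem lemma7:
  fixes A :: "real^'n^'m" and \<mu> \<nu> :: real and \<sigma> :: "nat \<Rightarrow> real" and lam :: ereal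
  assumes "\<mu> \<ge> 0" and "\<nu> \<ge> 0"
    and "lam = (if \<mu> = 0 then 0
                else if pow0 (det (A ** transpose A)) \<nu> > 0
                  then ereal (sqrt (\<mu>\<^sup>2 / pow0 (det (A ** transpose A)) \<nu>))
                else \<infinity>)"
    and "singular_values A \<sigma>"
  shows "ereal (spec_norm (damped_pinv lam A)) \<le>
           min (ereal (if A = 0 then 0 else 1 / \<sigma> (rank A)))
               (if \<mu> = 0 then \<infinity>
                else ereal (1 / (2 * \<mu>) * (\<Prod>i=1..min CARD('m) CARD('n). pow0 (\<sigma> i) \<nu>)))
         \<and> (\<mu> > 0 \<longrightarrow> spec_norm (damped_pinv lam A)
           \<le> 1 / (2 * \<mu>) * pow0 (spec_norm A) (\<nu> * real (min CARD('m) CARD('n))))"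
proof -
  note mu0 = assms(1) and nu0 = assms(2) and lamdef = assms(3)
  define l where "l = min CARD('m) CARD('n)"
  have l1: "1 \<le> l" unfolding l_def by (simp add: Suc_le_eq)
  obtain U V em en where oU: "orthogonal_matrix (U::real^'m^'m)" and oV: "orthogonal_matrix (V::real^'n^'n)"
    and bem: "bij_betw (em::'m\<Rightarrow>nat) UNIV {1..CARD('m)}" and ben: "bij_betw (en::'n\<Rightarrow>nat) UNIV {1..CARD('n)}"
    and A: "A = U ** gd em en \<sigma> ** transpose V"
    and s0: "\<And>i. i \<in> {1..l} \<Longrightarrow> 0 \<le> \<sigma> i"
    and sdec: "\<And>i j. i \<in> {1..l} \<Longrightarrow> j \<in> {1..l} \<Longrightarrow> i \<le> j \<Longrightarrow> \<sigma> j \<le> \<sigma> i"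
    using assms(4) unfolding singular_values_def Let_def gd_def l_def by blast
  have iem: "inj em" and ien: "inj en" using bem ben by (auto simp: bij_betw_def)
  have ren: "range en = {1..CARD('n)}" using ben by (auto simp: bij_betw_def)
  have rem: "range em = {1..CARD('m)}" using bem by (auto simp: bij_betw_def)
  define S where "S = {k\<in>{1..l}. \<sigma> k \<noteq> 0}"
  define r where "r = rank A"
  have rS: "r = card S" unfolding r_def S_def l_def by (rule rank_gd[OF oU oV bem ben A])
  have Seq: "S = {1..r}" unfolding rS
  proof (rule prefix_set)
    show "finite S" by (simp add: S_def)
    show "\<And>k. k \<in> S \<Longrightarrow> 1 \<le> k" by (auto simp: S_def)
    fix k j assume k: "k \<in> S" and j: "1 \<le> j" "j \<le> k"
    have "\<sigma> k \<le> \<sigma> j" using k j by (intro sdec) (auto simp: S_def)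
    moreover have "0 \<le> \<sigma> k" "\<sigma> k \<noteq> 0" using k s0 by (auto simp: S_def)
    ultimately show "j \<in> S" using k j by (auto simp: S_def)
  qed
  define g where "g = (\<lambda>t k. \<sigma> k * inverse ((\<sigma> k)\<^sup>2 + t\<^sup>2))"
  have pb: "spec_norm (transpose A ** mp_pinv (A ** transpose A + t\<^sup>2 *\<^sub>R mat 1)) \<le> b"
    if "0 \<le> b" "\<And>k. k \<in> {1..l} \<Longrightarrow> g t k \<le> b" for t b
  proof (rule pinv_bound[OF oU oV iem ien A _ that(1)])
    fix i assume "em i \<in> range en"
    then have k: "em i \<in> {1..l}" using rem ren unfolding l_def by auto
    then have "0 \<le> g t (em i)" using s0 by (simp add: g_def)
    then show "\<bar>\<sigma> (em i) * inverse ((\<sigma> (em i))\<^sup>2 + t\<^sup>2)\<bar> \<le> b"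
      using that(2)[OF k] by (simp add: g_def)
  qed
  define M1 where "M1 = (if A = 0 then 0 else 1 / \<sigma> r)"
  define Q where "Q = (\<Prod>i=1..l. pow0 (\<sigma> i) \<nu>)"
  define N where "N = spec_norm (damped_pinv lam A)"
  have M1nn: "0 \<le> M1"
  proof (cases "A = 0")
    case False
    then have "r \<noteq> 0" unfolding r_def using rank_eq_0 by blast
    then have "r \<in> S" unfolding Seq by simp
    then show ?thesis using s0 False by (auto simp: M1_def S_def)
  qed (simp add: M1_def)
  have Qnn: "0 \<le> Q" unfolding Q_def by (intro prod_nonneg) (simp add: pow0_nonneg)
  have NA0: "N = 0" if "A = 0"
    unfolding N_def damped_pinv_def that by (simp add: transpose_zero' spec_norm_zero)
  have claim: "N \<le> M1 \<and> (\<mu> > 0 \<longrightarrow> N \<le> 1 / (2 * \<mu>) * Q)"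
  proof (cases "lam = \<infinity>")
    case True
    then have "N = 0" unfolding N_def damped_pinv_def by (simp add: spec_norm_zero)
    then show ?thesis using M1nn Qnn mu0 by auto
  next
    case False
    then obtain t where lt: "lam = ereal t"
      and tcase: "(\<mu> = 0 \<and> t = 0) \<or> (\<mu> > 0 \<and> pow0 (det (A ** transpose A)) \<nu> > 0
            \<and> t = sqrt (\<mu>\<^sup>2 / pow0 (det (A ** transpose A)) \<nu>))"
      using lamdef mu0 by (auto split: if_splits simp: zero_ereal_def)
    have Neq: "N = spec_norm (transpose A ** mp_pinv (A ** transpose A + t\<^sup>2 *\<^sub>R mat 1))"
      unfolding N_def damped_pinv_def lt by simp
    have part1: "N \<le> M1"
    proof (cases "A = 0")
      case True then show ?thesis using NA0 M1nn by simp
    next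
      case False
      then have "r \<noteq> 0" unfolding r_def using rank_eq_0 by blast
      then have "r \<in> S" unfolding Seq by simp
      then have sr: "0 < \<sigma> r" using s0 by (auto simp: S_def less_le)
      show ?thesis unfolding Neq
      proof (rule pb)
        show "0 \<le> M1" by (rule M1nn)
        fix k assume k: "k \<in> {1..l}"
        show "g t k \<le> M1"
        proof (cases "\<sigma> k = 0")
          case True then show ?thesis using M1nn by (simp add: g_def)
        next
          case False
          then have "k \<in> S" using k by (simp add: S_def)
          then have "k \<le> r" unfolding Seq by simp
          then have "\<sigma> r \<le> \<sigma> k" using k \<open>r \<in> S\<close> by (intro sdec) (auto simp: S_def)
          have "g t k \<le> 1 / \<sigma> k" unfolding g_def using sr \<open>\<sigma> r \<le> \<sigma> k\<close> by (intro sc1) simp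
          also have "\<dots> \<le> 1 / \<sigma> r" using sr \<open>\<sigma> r \<le> \<sigma> k\<close> by (intro divide_left_mono) auto
          finally show ?thesis using \<open>A \<noteq> 0\<close> by (simp add: M1_def)
        qed
      qed
    qed
    have part2: "N \<le> 1 / (2 * \<mu>) * Q" if mup: "\<mu> > 0"
    proof -
      define P where "P = pow0 (det (A ** transpose A)) \<nu>"
      have Pp: "P > 0" and teq: "t = sqrt (\<mu>\<^sup>2 / P)" using tcase mup by (auto simp: P_def)
      have PQ: "P = Q\<^sup>2"
      proof (cases "\<nu> = 0")
        case True then show ?thesis by (simp add: P_def Q_def pow0_zero_exp)
      next
        case False
        then have nup: "\<nu> > 0" using nu0 by simp
        define d where "d = det (A ** transpose A)"
        have d: "d = (\<Prod>k\<in>{1..CARD('m)}. if k \<le> CARD('n) then (\<sigma> k)\<^sup>2 else 0)"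
          unfolding d_def by (rule det_AAT[OF oU oV bem ben A])
        have "d \<noteq> 0" using Pp nup by (auto simp: P_def d_def pow0_def)
        have mn: "CARD('m) \<le> CARD('n)"
        proof (rule ccontr)
          assume "\<not> CARD('m) \<le> CARD('n)"
          then have "CARD('m) \<in> {1..CARD('m)}" "\<not> CARD('m) \<le> CARD('n)" by (auto simp: Suc_le_eq)
          then have "d = 0" unfolding d by (intro prod_zero) auto
          then show False using \<open>d \<noteq> 0\<close> by simp
        qed
        then have lm: "l = CARD('m)" by (simp add: l_def)
        have d2: "d = (\<Prod>k\<in>{1..l}. (\<sigma> k)\<^sup>2)" unfolding d lm using mn by (intro prod.cong) auto
        have snz: "\<sigma> k \<noteq> 0" if "k \<in> {1..l}" for k
        proof
          assume "\<sigma> k = 0"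
          then have "d = 0" unfolding d2 using that by (intro prod_zero) auto
          then show False using \<open>d \<noteq> 0\<close> by simp
        qed
        have "P = d powr \<nu>" using \<open>d \<noteq> 0\<close> by (simp add: P_def d_def pow0_def)
        also have "\<dots> = (\<Prod>k\<in>{1..l}. ((\<sigma> k)\<^sup>2) powr \<nu>)" unfolding d2 by (rule prod_powr_distrib)
        also have "\<dots> = (\<Prod>k\<in>{1..l}. (pow0 (\<sigma> k) \<nu>)\<^sup>2)"
        proof (rule prod.cong)
          fix k assume k: "k \<in> {1..l}"
          have "((\<sigma> k)\<^sup>2) powr \<nu> = (\<sigma> k powr \<nu>) * (\<sigma> k powr \<nu>)"
            unfolding power2_eq_square by (rule powr_mult)
          then show "((\<sigma> k)\<^sup>2) powr \<nu> = (pow0 (\<sigma> k) \<nu>)\<^sup>2"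
            using snz[OF k] by (simp add: pow0_def power2_eq_square)
        qed simp
        also have "\<dots> = Q\<^sup>2" unfolding Q_def by (simp add: prod_power_distrib)
        finally show ?thesis .
      qed
      have Qp: "Q > 0" using PQ Pp Qnn by (metis less_eq_real_def power_zero_numeral zero_less_numeral power_eq_0_iff)
      have tQ: "t = \<mu> / Q" using teq PQ mup Qp by (simp add: real_sqrt_divide)
      have tp: "t > 0" using tQ mup Qp by simp
      have b: "1 / (2 * t) = 1 / (2 * \<mu>) * Q" unfolding tQ using mup Qp by simp
      show ?thesis unfolding Neq b[symmetric]
      proof (rule pb)
        show "0 \<le> 1 / (2 * t)" using tp by simp
        fix k assume k: "k \<in> {1..l}"
        show "g t k \<le> 1 / (2 * t)" unfolding g_def using s0[OF k] tp by (rule sc2)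
      qed
    qed
    show ?thesis using part1 part2 by blast
  qed
  have QA: "Q \<le> pow0 (spec_norm A) (\<nu> * real l)"
  proof (cases "\<nu> = 0")
    case True then show ?thesis by (simp add: Q_def pow0_zero_exp)
  next
    case False
    then have nup: "\<nu> > 0" using nu0 by simp
    define a where "a = spec_norm A"
    have a0: "0 \<le> a" unfolding a_def by (rule spec_norm_nonneg)
    have sa: "\<sigma> k \<le> a" if "k \<in> {1..l}" for k
    proof -
      have "\<sigma> k \<le> \<sigma> 1" using that l1 by (intro sdec) auto
      also have "\<dots> \<le> a" unfolding a_def by (rule sigma1_le[OF oU oV bem ben A])
      finally show ?thesis .
    qed
    have "Q \<le> (\<Prod>i\<in>{1..l}. pow0 a \<nu>)" unfolding Q_def
    proof (rule prod_mono)
      fix k assume k: "k \<in> {1..l}"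
      show "0 \<le> pow0 (\<sigma> k) \<nu> \<and> pow0 (\<sigma> k) \<nu> \<le> pow0 a \<nu>"
      proof (cases "\<sigma> k = 0")
        case True then show ?thesis using nup by (simp add: pow0_def)
      next
        case False
        then have "0 < \<sigma> k" using s0[OF k] by simp
        moreover then have "0 < a" using sa[OF k] by simp
        ultimately show ?thesis using sa[OF k] nup by (simp add: pow0_def powr_mono2)
      qed
    qed
    also have "\<dots> = (pow0 a \<nu>) ^ l" by simp
    also have "\<dots> = pow0 a (\<nu> * real l)"
    proof (cases "a = 0")
      case True then show ?thesis using nup l1 by (simp add: pow0_def)
    next
      case False
      then have "(a powr \<nu>) ^ l = (a powr \<nu>) powr (real l)" by (simp add: powr_realpow)
      also have "\<dots> = a powr (\<nu> * real l)" by (simp add: powr_powr)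
      finally show ?thesis using False by (simp add: pow0_def)
    qed
    finally show ?thesis unfolding a_def .
  qed
  show ?thesis
  proof
    show "ereal (spec_norm (damped_pinv lam A)) \<le>
           min (ereal (if A = 0 then 0 else 1 / \<sigma> (rank A)))
               (if \<mu> = 0 then \<infinity>
                else ereal (1 / (2 * \<mu>) * (\<Prod>i=1..min CARD('m) CARD('n). pow0 (\<sigma> i) \<nu>)))"
      using claim mu0 unfolding N_def M1_def Q_def l_def r_def by auto
    show "\<mu> > 0 \<longrightarrow> spec_norm (damped_pinv lam A)
           \<le> 1 / (2 * \<mu>) * pow0 (spec_norm A) (\<nu> * real (min CARD('m) CARD('n)))"
    proof
      assume mup: "\<mu> > 0"
      have "N \<le> 1 / (2 * \<mu>) * Q" using claim mup by blast
      also have "\<dots> \<le> 1 / (2 * \<mu>) * pow0 (spec_norm A) (\<nu> * real l)"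
        using QA mup by (intro mult_left_mono) auto
      finally show "spec_norm (damped_pinv lam A)
           \<le> 1 / (2 * \<mu>) * pow0 (spec_norm A) (\<nu> * real (min CARD('m) CARD('n)))"
        unfolding N_def l_def .
    qed
  qed
qed

end
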